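(* Let $S$ be a $0$-left cancellative semigroup admitting least common multiples. Then for every open maximal string $\sigma$ in $S$, the map $\varphi_\sigma$ is an ultracharacter of $\mathfrak E(S)$.
   Context: $S$ has zero $0$, $S'=S\setminus\{0\}$; $0$-left cancellative: $st=sr\ne0\Rightarrow t=r$. $\tilde S=S\cup\{1\}$ ($1$ an adjoined identity); $s\mid t$ iff $t\in s\tilde S$; $r$ is a least common multiple of $s,t$ if $sS\cap tS=rS$, $s\mid r$, $t\mid r$; every pair has one. For $s\in S$: $F_s=\{x\in S':sx\ne0\}$, $E_s=sS\setminus\{0\}$, $\theta_s:F_s\to E_s$, $x\mapsto sx$. $\mathcal H(S)$ is the inverse semigroup of partial bijections of $S'$ generated by the $\theta_s$, and $\mathfrak E(S)=\{X\subseteq S':\mathrm{id}_X\in\mathcal H(S)\}$, a semilattice under $\cap$ with zero $\emptyset$. A string is a nonempty $\sigma\subseteq S$ with $0\notin\sigma$, closed under divisors, with any two elements having a common multiple in $\sigma$; maximal: not properly contained in another string; open: $\sigma=\{s\in S:\exists p\in S,\ sp\in\sigma\}$. For a string $\sigma$ and $X\in\mathfrak E(S)$ put $\varphi_\sigma(X)=1$ if for every $s\in\sigma$ there is $t\in\sigma\cap X$ with $s\mid t$, and $\varphi_\sigma(X)=0$ otherwise. A character of $\mathfrak E(S)$ is a nonzero map $\varphi:\mathfrak E(S)\to\{0,1\}$ with $\varphi(\emptyset)=0$ and $\varphi(X\cap Y)=\varphi(X)\varphi(Y)$; it is an ultracharacter if for every character $\psi$, $\varphi\le\psi$ pointwise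 implies $\varphi=\psi$. *)

theory Defs
  imports Main
begin

text \<open>The semigroup S with zero is the type 'a of class semigroup_mult and mult_zero
  (so 0 * x = 0 = x * 0). S' = UNIV - {0}. Partial bijections of S' are
  represented as relations (sets of pairs).\<close>

definition zero_left_cancellative :: "'a::{semigroup_mult,mult_zero} itself \<Rightarrow> bool" where
  "zero_left_cancellative _ \<longleftrightarrow> (\<forall>s t r::'a. s * t = s * r \<and> s * t \<noteq> 0 \<longrightarrow> t = r)"

text \<open>s divides t iff t \<in> s (S \<union> {1}), i.e. t = s or t = s u for some u.\<close>
definition sdvd :: "'a::{semigroup_mult,mult_zero} \<Rightarrow> 'a \<Rightarrow> bool" where
  "sdvd s t \<longleftrightarrow> t = s \<or> (\<exists>u. t = s * u)"

definition right_ideal :: "'a::{semigroup_mult,mult_zero} \<Rightarrow> 'a set" where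
  "right_ideal s = {s * u | u. True}"

definition is_lcm :: "'a::{semigroup_mult,mult_zero} \<Rightarrow> 'a \<Rightarrow> 'a \<Rightarrow> bool" where
  "is_lcm r s t \<longleftrightarrow> right_ideal s \<inter> right_ideal t = right_ideal r \<and> sdvd s r \<and> sdvd t r"

definition admits_lcm :: "'a::{semigroup_mult,mult_zero} itself \<Rightarrow> bool" where
  "admits_lcm _ \<longleftrightarrow> (\<forall>s t::'a. \<exists>r. is_lcm r s t)"

definition theta :: "'a::{semigroup_mult,mult_zero} \<Rightarrow> ('a \<times> 'a) set" where
  "theta s = {(x, s * x) | x. x \<noteq> 0 \<and> s * x \<noteq> 0}"

inductive_set HS :: "('a::{semigroup_mult,mult_zero} \<times> 'a) set set" where
  gen: "theta s \<in> HS"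
| comp: "f \<in> HS \<Longrightarrow> g \<in> HS \<Longrightarrow> f O g \<in> HS"
| inv: "f \<in> HS \<Longrightarrow> f\<inverse> \<in> HS"

definition ES :: "'a::{semigroup_mult,mult_zero} set set" where
  "ES = {X. X \<subseteq> UNIV - {0} \<and> Id_on X \<in> HS}"

definition is_string :: "'a::{semigroup_mult,mult_zero} set \<Rightarrow> bool" where
  "is_string \<sigma> \<longleftrightarrow> \<sigma> \<noteq> {} \<and> 0 \<notin> \<sigma>
     \<and> (\<forall>t\<in>\<sigma>. \<forall>s. sdvd s t \<longrightarrow> s \<in> \<sigma>)
     \<and> (\<forall>s\<in>\<sigma>. \<forall>t\<in>\<sigma>. \<exists>r\<in>\<sigma>. sdvd s r \<and> sdvd t r)"

definition maximal_string :: "'a::{semigroup_mult,mult_zero} set \<Rightarrow> bool" where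
  "maximal_string \<sigma> \<longleftrightarrow> is_string \<sigma> \<and> (\<forall>\<tau>. is_string \<tau> \<and> \<sigma> \<subseteq> \<tau> \<longrightarrow> \<tau> = \<sigma>)"

definition open_string :: "'a::{semigroup_mult,mult_zero} set \<Rightarrow> bool" where
  "open_string \<sigma> \<longleftrightarrow> \<sigma> = {s. \<exists>p. s * p \<in> \<sigma>}"

definition phi :: "'a::{semigroup_mult,mult_zero} set \<Rightarrow> 'a set \<Rightarrow> nat" where
  "phi \<sigma> X = (if \<forall>s\<in>\<sigma>. \<exists>t\<in>\<sigma> \<inter> X. sdvd s t then 1 else 0)"

text \<open>Characters of E(S), as maps E(S) \<rightarrow> {0,1} (only values on E(S) matter).\<close>
definition character :: "('a::{semigroup_mult,mult_zero} set \<Rightarrow> nat) \<Rightarrow> bool" where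
  "character \<phi> \<longleftrightarrow> (\<forall>X\<in>ES. \<phi> X \<in> {0, 1}) \<and> (\<exists>X\<in>(ES::'a set set). \<phi> X \<noteq> 0)
     \<and> \<phi> {} = 0 \<and> (\<forall>X\<in>ES. \<forall>Y\<in>ES. \<phi> (X \<inter> Y) = \<phi> X * \<phi> Y)"

definition ultracharacter :: "('a::{semigroup_mult,mult_zero} set \<Rightarrow> nat) \<Rightarrow> bool" where
  "ultracharacter \<phi> \<longleftrightarrow> character \<phi> \<and>
     (\<forall>\<psi>. character \<psi> \<and> (\<forall>X\<in>ES. \<phi> X \<le> \<psi> X) \<longrightarrow> (\<forall>X\<in>ES. \<phi> X = \<psi> X))"

end

theory Submission imports Defs begin

lemma sdvd_refl[simp]: "sdvd s s" by (simp add: sdvd_def)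
lemma sdvd_mult[simp]: "sdvd s (s*u)" by (auto simp: sdvd_def)
lemma sdvd_trans: "sdvd a b \<Longrightarrow> sdvd b c \<Longrightarrow> sdvd a c"
  unfolding sdvd_def by (metis mult.assoc)
lemma sdvd_mult_right: "sdvd a b \<Longrightarrow> sdvd a (b*u)"
  using sdvd_trans sdvd_mult by blast
lemma sdvd_zero: "sdvd 0 x \<Longrightarrow> x = 0" unfolding sdvd_def by auto

definition E :: "'a::{semigroup_mult,mult_zero} \<Rightarrow> 'a set" where
  "E s = right_ideal s - {0}"

lemma E_mono: "sdvd a b \<Longrightarrow> E b \<subseteq> E a"
  unfolding E_def right_ideal_def sdvd_def by (auto, metis mult.assoc)

lemma string_dir: "is_string \<sigma> \<Longrightarrow> a\<in>\<sigma> \<Longrightarrow> b\<in>\<sigma> \<Longrightarrow> \<exists>c\<in>\<sigma>. sdvd a c \<and> sdvd b c"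
  unfolding is_string_def by blast
lemma string_down: "is_string \<sigma> \<Longrightarrow> t\<in>\<sigma> \<Longrightarrow> sdvd s t \<Longrightarrow> s\<in>\<sigma>"
  unfolding is_string_def by blast
lemma string_nz: "is_string \<sigma> \<Longrightarrow> t\<in>\<sigma> \<Longrightarrow> t \<noteq> 0"
  unfolding is_string_def by blast
lemma string_ne: "is_string \<sigma> \<Longrightarrow> \<exists>t. t\<in>\<sigma>"
  unfolding is_string_def by blast
lemma open_ext: "open_string \<sigma> \<Longrightarrow> s\<in>\<sigma> \<Longrightarrow> \<exists>p. s*p\<in>\<sigma>"
  unfolding open_string_def by blast

lemma E_right: "t0 \<in> E s \<Longrightarrow> sdvd t0 t \<Longrightarrow> t \<noteq> 0 \<Longrightarrow> t \<in> E s"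
proof -
  assume a: "t0 \<in> E s" "sdvd t0 t" "t \<noteq> 0"
  then obtain w where w: "t0 = s*w" unfolding E_def right_ideal_def by auto
  from a(2) consider "t = t0" | u where "t = t0*u" unfolding sdvd_def by blast
  then show ?thesis
  proof cases
    case 1 then show ?thesis using a by simp
  next
    case (2 u) then have "t = s*(w*u)" using w by (simp add: mult.assoc)
    then show ?thesis using a(3) unfolding E_def right_ideal_def by auto
  qed
qed

definition ev :: "'a::{semigroup_mult,mult_zero} set \<Rightarrow> ('a \<Rightarrow> bool) \<Rightarrow> bool" where
  "ev \<sigma> P \<longleftrightarrow> (\<exists>t0\<in>\<sigma>. \<forall>t\<in>\<sigma>. sdvd t0 t \<longrightarrow> P t)"

lemma ev_conj: "is_string \<sigma> \<Longrightarrow> ev \<sigma> P \<Longrightarrow> ev \<sigma> Q \<Longrightarrow> ev \<sigma> (\<lambda>t. P t \<and> Q t)"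
  unfolding ev_def by (meson string_dir sdvd_trans)
lemma ev_cofinal: "is_string \<sigma> \<Longrightarrow> ev \<sigma> P \<Longrightarrow> s\<in>\<sigma> \<Longrightarrow> \<exists>t\<in>\<sigma>. sdvd s t \<and> P t"
  unfolding ev_def by (meson string_dir sdvd_trans)
lemma ev_mono: "ev \<sigma> P \<Longrightarrow> (\<And>t. t\<in>\<sigma> \<Longrightarrow> P t \<Longrightarrow> Q t) \<Longrightarrow> ev \<sigma> Q"
  unfolding ev_def by blast

definition pre :: "('a \<times> 'a) set \<Rightarrow> 'a set \<Rightarrow> 'a set" where
  "pre f X = {x. \<exists>y\<in>X. (x,y)\<in>f}"

definition Lp :: "('a::{semigroup_mult,mult_zero} \<times> 'a) set \<Rightarrow> bool" where
  "Lp f \<longleftrightarrow> (\<forall>x y u. (x,y)\<in>f \<longrightarrow> x*u \<in> Domain f \<longrightarrow> (x*u, y*u) \<in> f)"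

definition basic :: "('a::{semigroup_mult,mult_zero} \<times> 'a) set \<Rightarrow> bool" where
  "basic f \<longleftrightarrow> single_valued f \<and> (\<forall>x y. (x,y)\<in>f \<longrightarrow> x\<noteq>0 \<and> y\<noteq>0) \<and> Lp f"

lemma basic_sdvd:
  assumes "basic f" "(x,y)\<in>f" "sdvd x x'" "x' \<in> Domain f"
  shows "\<exists>y'. (x',y')\<in>f \<and> sdvd y y'"
proof -
  from assms(3) consider "x' = x" | u where "x' = x*u" unfolding sdvd_def by blast
  then show ?thesis
  proof cases
    case 1 then show ?thesis using assms by auto
  next
    case 2 then have "(x', y*u)\<in>f" using assms unfolding basic_def Lp_def by blast
    then show ?thesis by auto
  qed
qed

locale zl =
  assumes zlc: "zero_left_cancellative TYPE('a::{semigroup_mult,mult_zero})"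
    and lcmA: "admits_lcm TYPE('a)"
begin

lemma cancel: "(s::'a)*t = s*r \<Longrightarrow> s*t \<noteq> 0 \<Longrightarrow> t = r"
  using zlc unfolding zero_left_cancellative_def by blast

lemma basic_theta: "basic (theta (s::'a))"
  unfolding basic_def Lp_def theta_def single_valued_def
  by (auto simp: mult.assoc)

lemma basic_theta_inv: "basic ((theta (s::'a))\<inverse>)"
  unfolding basic_def Lp_def theta_def single_valued_def
  apply (auto simp: mult.assoc)
  apply (metis cancel)
  done

lemma basic_comp: "basic f \<Longrightarrow> basic g \<Longrightarrow> basic (f O g)"
proof -
  assume bf: "basic f" and bg: "basic g"
  have sv: "single_valued (f O g)" using bf bg unfolding basic_def by (simp add: single_valued_relcomp)
  have nz: "\<forall>x y. (x,y)\<in>f O g \<longrightarrow> x\<noteq>0 \<and> y\<noteq>0" using bf bg unfolding basic_def by blast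
  have L: "Lp (f O g)"
    unfolding Lp_def
  proof (intro allI impI)
    fix x z u assume xz: "(x,z)\<in>f O g" and d: "x*u \<in> Domain (f O g)"
    from xz obtain y where xy: "(x,y)\<in>f" and yz: "(y,z)\<in>g" by blast
    from d obtain y' z' where 1: "(x*u,y')\<in>f" and 2: "(y',z')\<in>g" by blast
    have "(x*u, y*u)\<in>f" using bf xy 1 unfolding basic_def Lp_def by blast
    with 1 have "y' = y*u" using bf unfolding basic_def single_valued_def by blast
    with 2 have "(y*u, z*u)\<in>g" using bg yz unfolding basic_def Lp_def by blast
    with \<open>(x*u, y*u)\<in>f\<close> show "(x*u, z*u)\<in>f O g" by blast
  qed
  show ?thesis using sv nz L unfolding basic_def by blast
qed

lemma HS_basic: "f \<in> HS \<Longrightarrow> basic (f::('a\<times>'a) set) \<and> basic (f\<inverse>)"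
proof (induction rule: HS.induct)
  case (gen s) then show ?case using basic_theta basic_theta_inv by blast
next
  case (comp f g) then show ?case using basic_comp[of f g] basic_comp[of "g\<inverse>" "f\<inverse>"] by (simp add: converse_relcomp)
next
  case (inv f) then show ?case by simp
qed

lemma HS_sv: "f \<in> HS \<Longrightarrow> single_valued (f::('a\<times>'a) set)"
  using HS_basic basic_def by blast
lemma HS_inj: "f \<in> HS \<Longrightarrow> (x,y)\<in>(f::('a\<times>'a) set) \<Longrightarrow> (x',y)\<in>f \<Longrightarrow> x = x'"
  using HS_basic[of f] unfolding basic_def single_valued_def by blast
lemma HS_nz: "f \<in> HS \<Longrightarrow> (x,y)\<in>(f::('a\<times>'a) set) \<Longrightarrow> x \<noteq> 0 \<and> y \<noteq> 0"
  using HS_basic basic_def by blast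
lemma HS_fun: "f \<in> HS \<Longrightarrow> (x,y)\<in>(f::('a\<times>'a) set) \<Longrightarrow> (x,y')\<in>f \<Longrightarrow> y = y'"
  using HS_sv single_valued_def by metis

lemma Dom_ES: "f \<in> HS \<Longrightarrow> Domain (f::('a\<times>'a) set) \<in> ES"
proof -
  assume f: "f \<in> HS"
  have "Id_on (Domain f) = f O f\<inverse>"
    using HS_inj[OF f] by (auto simp: Id_on_def)
  moreover have "f O f\<inverse> \<in> HS" using f by (intro HS.comp HS.inv)
  ultimately show ?thesis unfolding ES_def using HS_nz[OF f] by auto
qed

lemma pre_ES: "f \<in> HS \<Longrightarrow> X \<in> ES \<Longrightarrow> pre (f::('a\<times>'a) set) X \<in> ES"
proof -
  assume f: "f \<in> HS" and X: "X \<in> ES"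
  have "Id_on (pre f X) = f O Id_on X O f\<inverse>"
    using HS_inj[OF f] by (auto simp: Id_on_def pre_def)
  moreover have "f O Id_on X O f\<inverse> \<in> HS" using f X unfolding ES_def by (intro HS.comp HS.inv) auto
  ultimately show ?thesis unfolding ES_def pre_def using HS_nz[OF f] by auto
qed

lemma Int_ES: "X \<in> ES \<Longrightarrow> Y \<in> ES \<Longrightarrow> X \<inter> (Y::'a set) \<in> ES"
proof -
  assume "X \<in> ES" "Y \<in> ES"
  moreover have "Id_on (X \<inter> Y) = Id_on X O Id_on Y" by auto
  ultimately show ?thesis unfolding ES_def using HS.comp by auto
qed

lemma empty_ES: "({}::'a set) \<in> ES"
proof -
  have "theta (0::'a) = {}" unfolding theta_def by simp
  then show ?thesis unfolding ES_def using HS.gen[of "0::'a"] by simp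
qed

lemma Dom_theta: "Domain (theta (s::'a)) = {x. x\<noteq>0 \<and> s*x \<noteq> 0}"
  unfolding theta_def by auto
lemma Dom_theta_inv: "Domain ((theta (s::'a))\<inverse>) = E s"
proof
  show "Domain ((theta s)\<inverse>) \<subseteq> E s" unfolding theta_def E_def right_ideal_def by auto
  show "E s \<subseteq> Domain ((theta s)\<inverse>)"
  proof
    fix y assume "y \<in> E s"
    then obtain u where "y = s*u" "y \<noteq> 0" unfolding E_def right_ideal_def by auto
    moreover then have "u \<noteq> 0" by auto
    ultimately show "y \<in> Domain ((theta s)\<inverse>)" unfolding theta_def by auto
  qed
qed

lemma E_ES: "E (s::'a) \<in> ES"
  using Dom_ES[OF HS.inv[OF HS.gen[of s]]] Dom_theta_inv by simp
lemma F_ES: "{x. x\<noteq>0 \<and> (s::'a)*x \<noteq> 0} \<in> ES"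
  using Dom_ES[OF HS.gen[of s]] Dom_theta by simp

lemma IdX_ES: "X \<in> ES \<Longrightarrow> Id_on (X::'a set) \<in> HS" unfolding ES_def by auto


definition Sinv :: "('a \<times> 'a) set \<Rightarrow> bool" where
  "Sinv f \<longleftrightarrow> (\<forall>\<sigma>. is_string \<sigma> \<and> open_string \<sigma> \<longrightarrow>
      ev \<sigma> (\<lambda>t. t \<notin> Domain f) \<or> ev \<sigma> (\<lambda>t. t \<in> Domain f))"

definition img :: "('a \<times> 'a) set \<Rightarrow> 'a set \<Rightarrow> 'a set" where
  "img f \<sigma> = {y. \<exists>t\<in>\<sigma>. \<exists>x. (t,x)\<in>f \<and> sdvd y x}"

lemma img_string:
  fixes f :: "('a \<times> 'a) set"
  assumes bf: "basic f" and st: "is_string \<sigma>" and op: "open_string \<sigma>"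
    and evd: "ev \<sigma> (\<lambda>t. t \<in> Domain f)"
  shows "is_string (img f \<sigma>) \<and> open_string (img f \<sigma>)"
proof -
  from evd obtain t0 where t0: "t0\<in>\<sigma>" and T: "\<And>t. t\<in>\<sigma> \<Longrightarrow> sdvd t0 t \<Longrightarrow> t \<in> Domain f"
    unfolding ev_def by blast
  have nz: "\<And>x y. (x,y)\<in>f \<Longrightarrow> x\<noteq>0 \<and> y\<noteq>0" using bf unfolding basic_def by blast
  have ne: "img f \<sigma> \<noteq> {}"
  proof -
    from T[OF t0] obtain x where "(t0,x)\<in>f" by auto
    then have "x \<in> img f \<sigma>" using t0 sdvd_refl unfolding img_def by blast
    then show ?thesis by blast
  qed
  have z: "0 \<notin> img f \<sigma>"
  proof
    assume "0 \<in> img f \<sigma>"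
    then obtain t x where "(t,x)\<in>f" "sdvd 0 x" unfolding img_def by blast
    then show False using nz sdvd_zero by blast
  qed
  have down: "\<forall>t\<in>img f \<sigma>. \<forall>s. sdvd s t \<longrightarrow> s \<in> img f \<sigma>"
  proof (intro ballI allI impI)
    fix t s assume "t \<in> img f \<sigma>" "sdvd s t"
    then obtain t' x where "t'\<in>\<sigma>" "(t',x)\<in>f" "sdvd t x" unfolding img_def by blast
    moreover have "sdvd s x" using sdvd_trans \<open>sdvd s t\<close> \<open>sdvd t x\<close> by blast
    ultimately show "s \<in> img f \<sigma>" unfolding img_def by blast
  qed
  have dir: "\<forall>a\<in>img f \<sigma>. \<forall>b\<in>img f \<sigma>. \<exists>r\<in>img f \<sigma>. sdvd a r \<and> sdvd b r"
  proof (intro ballI)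
    fix a b assume "a \<in> img f \<sigma>" "b \<in> img f \<sigma>"
    then obtain t1 x1 t2 x2 where 1: "t1\<in>\<sigma>" "(t1,x1)\<in>f" "sdvd a x1"
      and 2: "t2\<in>\<sigma>" "(t2,x2)\<in>f" "sdvd b x2" unfolding img_def by blast
    obtain c where c: "c\<in>\<sigma>" "sdvd t1 c" "sdvd t2 c" using string_dir[OF st 1(1) 2(1)] by blast
    obtain d where d: "d\<in>\<sigma>" "sdvd t0 d" "sdvd c d" using string_dir[OF st t0 c(1)] by blast
    have dd: "d \<in> Domain f" using T d by blast
    obtain y1 where y1: "(d,y1)\<in>f" "sdvd x1 y1" using basic_sdvd[OF bf 1(2) sdvd_trans[OF c(2) d(3)] dd] by blast
    obtain y2 where y2: "(d,y2)\<in>f" "sdvd x2 y2" using basic_sdvd[OF bf 2(2) sdvd_trans[OF c(3) d(3)] dd] by blast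
    have "y1 = y2" using y1 y2 bf unfolding basic_def single_valued_def by blast
    have "y1 \<in> img f \<sigma>" using y1(1) d(1) sdvd_refl unfolding img_def by blast
    moreover have "sdvd a y1" using 1(3) y1(2) sdvd_trans by blast
    moreover have "sdvd b y1" using 2(3) y2(2) \<open>y1 = y2\<close> sdvd_trans by blast
    ultimately show "\<exists>r\<in>img f \<sigma>. sdvd a r \<and> sdvd b r" by blast
  qed
  have str: "is_string (img f \<sigma>)" unfolding is_string_def using ne z down dir by blast
  have opn: "open_string (img f \<sigma>)"
    unfolding open_string_def
  proof (rule set_eqI, rule iffI)
    fix y assume "y \<in> img f \<sigma>"
    then obtain t x where 1: "t\<in>\<sigma>" "(t,x)\<in>f" "sdvd y x" unfolding img_def by blast
    obtain c where c: "c\<in>\<sigma>" "sdvd t0 c" "sdvd t c" using string_dir[OF st t0 1(1)] by blast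
    obtain x' where x': "(c,x')\<in>f" "sdvd x x'" using basic_sdvd[OF bf 1(2) c(3)] T c by blast
    obtain p where p: "c*p \<in> \<sigma>" using open_ext[OF op c(1)] by blast
    have "c*p \<in> Domain f" using T[OF p] sdvd_mult_right[OF c(2)] by blast
    then have cp: "(c*p, x'*p) \<in> f" using bf x'(1) unfolding basic_def Lp_def by blast
    have yx: "sdvd y x'" using sdvd_trans 1(3) x'(2) by blast
    then consider "x' = y" | u where "x' = y*u" unfolding sdvd_def by blast
    then show "y \<in> {s. \<exists>p. s*p \<in> img f \<sigma>}"
    proof cases
      case 1 then have "(c*p, y*p) \<in> f" using cp by simp
      then have "y*p \<in> img f \<sigma>" using p unfolding img_def by (blast intro: sdvd_refl)
      then show ?thesis by blast
    next
      case 2 then have "x'*p = y*(u*p)" by (simp add: mult.assoc)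
      then have "(c*p, y*(u*p)) \<in> f" using cp by simp
      then have "y*(u*p) \<in> img f \<sigma>" using p unfolding img_def by (blast intro: sdvd_refl)
      then show ?thesis by blast
    qed
  next
    fix y assume "y \<in> {s. \<exists>p. s*p \<in> img f \<sigma>}"
    then show "y \<in> img f \<sigma>" using down by auto
  qed
  show ?thesis using str opn by blast
qed

lemma Sinv_comp:
  fixes f g :: "('a \<times> 'a) set"
  assumes bf: "basic f" and Sf: "Sinv f" and Sg: "Sinv g"
  shows "Sinv (f O g)"
  unfolding Sinv_def
proof (intro allI impI)
  fix \<sigma> :: "'a set" assume "is_string \<sigma> \<and> open_string \<sigma>"
  then have st: "is_string \<sigma>" and op: "open_string \<sigma>" by auto
  from Sf st op consider (N) "ev \<sigma> (\<lambda>t. t \<notin> Domain f)" | (Y) "ev \<sigma> (\<lambda>t. t \<in> Domain f)"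
    unfolding Sinv_def by blast
  then show "ev \<sigma> (\<lambda>t. t \<notin> Domain (f O g)) \<or> ev \<sigma> (\<lambda>t. t \<in> Domain (f O g))"
  proof cases
    case N
    have "ev \<sigma> (\<lambda>t. t \<notin> Domain (f O g))" using N by (rule ev_mono) blast
    then show ?thesis by blast
  next
    case Y
    from Y obtain t0 where t0: "t0\<in>\<sigma>" and T: "\<And>t. t\<in>\<sigma> \<Longrightarrow> sdvd t0 t \<Longrightarrow> t \<in> Domain f"
      unfolding ev_def by blast
    have sv: "single_valued f" using bf basic_def by blast
    have ts: "is_string (img f \<sigma>)" "open_string (img f \<sigma>)" using img_string[OF bf st op Y] by auto
    have key: "\<exists>t2\<in>\<sigma>. \<forall>t\<in>\<sigma>. sdvd t2 t \<longrightarrow> (\<exists>x. (t,x)\<in>f \<and> sdvd y0 x \<and> x \<in> img f \<sigma>)"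
      if "y0 \<in> img f \<sigma>" for y0
    proof -
      from that obtain t1 x1 where 1: "t1\<in>\<sigma>" "(t1,x1)\<in>f" "sdvd y0 x1" unfolding img_def by blast
      obtain t2 where t2: "t2\<in>\<sigma>" "sdvd t0 t2" "sdvd t1 t2" using string_dir[OF st t0 1(1)] by blast
      show ?thesis
      proof (intro bexI[OF _ t2(1)] allI impI ballI)
        fix t assume t: "t\<in>\<sigma>" "sdvd t2 t"
        then have "t \<in> Domain f" using T sdvd_trans t2(2) by blast
        then obtain x where "(t,x)\<in>f" "sdvd x1 x" using basic_sdvd[OF bf 1(2) sdvd_trans[OF t2(3) t(2)]] by blast
        moreover have "sdvd y0 x" using 1(3) \<open>sdvd x1 x\<close> sdvd_trans by blast
        moreover have "x \<in> img f \<sigma>" using t(1) \<open>(t,x)\<in>f\<close> unfolding img_def by (blast intro: sdvd_refl)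
        ultimately show "\<exists>x. (t,x)\<in>f \<and> sdvd y0 x \<and> x \<in> img f \<sigma>" by blast
      qed
    qed
    from Sg ts consider (N2) "ev (img f \<sigma>) (\<lambda>t. t \<notin> Domain g)" | (Y2) "ev (img f \<sigma>) (\<lambda>t. t \<in> Domain g)"
      unfolding Sinv_def by blast
    then show ?thesis
    proof cases
      case N2
      then obtain y0 where y0: "y0 \<in> img f \<sigma>" and Y0: "\<And>y. y \<in> img f \<sigma> \<Longrightarrow> sdvd y0 y \<Longrightarrow> y \<notin> Domain g"
        unfolding ev_def by blast
      obtain t2 where t2: "t2\<in>\<sigma>" and K: "\<And>t. t\<in>\<sigma> \<Longrightarrow> sdvd t2 t \<Longrightarrow> \<exists>x. (t,x)\<in>f \<and> sdvd y0 x \<and> x \<in> img f \<sigma>"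
        using key[OF y0] by blast
      have "ev \<sigma> (\<lambda>t. t \<notin> Domain (f O g))"
        unfolding ev_def
      proof (intro bexI[OF _ t2] ballI impI)
        fix t assume "t\<in>\<sigma>" "sdvd t2 t"
        then obtain x where x: "(t,x)\<in>f" "sdvd y0 x" "x \<in> img f \<sigma>" using K by blast
        then have "x \<notin> Domain g" using Y0 by blast
        show "t \<notin> Domain (f O g)"
        proof
          assume "t \<in> Domain (f O g)"
          then obtain x' z where "(t,x')\<in>f" "(x',z)\<in>g" by blast
          moreover have "x' = x" using sv x(1) \<open>(t,x')\<in>f\<close> unfolding single_valued_def by blast
          ultimately show False using \<open>x \<notin> Domain g\<close> by blast
        qed
      qed
      then show ?thesis by blast
    next
      case Y2
      then obtain y0 where y0: "y0 \<in> img f \<sigma>" and Y0: "\<And>y. y \<in> img f \<sigma> \<Longrightarrow> sdvd y0 y \<Longrightarrow> y \<in> Domain g"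
        unfolding ev_def by blast
      obtain t2 where t2: "t2\<in>\<sigma>" and K: "\<And>t. t\<in>\<sigma> \<Longrightarrow> sdvd t2 t \<Longrightarrow> \<exists>x. (t,x)\<in>f \<and> sdvd y0 x \<and> x \<in> img f \<sigma>"
        using key[OF y0] by blast
      have "ev \<sigma> (\<lambda>t. t \<in> Domain (f O g))"
        unfolding ev_def
      proof (intro bexI[OF _ t2] ballI impI)
        fix t assume "t\<in>\<sigma>" "sdvd t2 t"
        then obtain x where x: "(t,x)\<in>f" "sdvd y0 x" "x \<in> img f \<sigma>" using K by blast
        then have "x \<in> Domain g" using Y0 by blast
        then show "t \<in> Domain (f O g)" using x(1) by blast
      qed
      then show ?thesis by blast
    qed
  qed
qed

lemma Sinv_theta: "Sinv (theta (s::'a))"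
  unfolding Sinv_def
proof (intro allI impI)
  fix \<sigma> :: "'a set" assume "is_string \<sigma> \<and> open_string \<sigma>"
  then have st: "is_string \<sigma>" by auto
  show "ev \<sigma> (\<lambda>t. t \<notin> Domain (theta s)) \<or> ev \<sigma> (\<lambda>t. t \<in> Domain (theta s))"
  proof (cases "\<exists>t\<in>\<sigma>. s*t = 0")
    case True
    then obtain t0 where t0: "t0\<in>\<sigma>" "s*t0 = 0" by blast
    have "ev \<sigma> (\<lambda>t. t \<notin> Domain (theta s))"
      unfolding ev_def Dom_theta
    proof (intro bexI[OF _ t0(1)] ballI impI)
      fix t assume "t\<in>\<sigma>" "sdvd t0 t"
      then consider "t = t0" | u where "t = t0*u" unfolding sdvd_def by blast
      then show "t \<notin> {x. x\<noteq>0 \<and> s*x \<noteq> 0}"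
      proof cases
        case 1 then show ?thesis using t0(2) by simp
      next
        case (2 u) then have "s*t = (s*t0)*u" by (simp add: mult.assoc)
        then show ?thesis using t0(2) by simp
      qed
    qed
    then show ?thesis by blast
  next
    case False
    obtain t0 where "t0\<in>\<sigma>" using string_ne[OF st] by blast
    then have "ev \<sigma> (\<lambda>t. t \<in> Domain (theta s))"
      unfolding ev_def Dom_theta
    proof (intro bexI ballI impI)
      fix t assume "t \<in> \<sigma>"
      then show "t \<in> {x. x\<noteq>0 \<and> s*x \<noteq> 0}" using False string_nz[OF st] by auto
    qed
    then show ?thesis by blast
  qed
qed

lemma Sinv_theta_inv: "Sinv ((theta (s::'a))\<inverse>)"
  unfolding Sinv_def Dom_theta_inv
proof (intro allI impI)
  fix \<sigma> :: "'a set" assume "is_string \<sigma> \<and> open_string \<sigma>"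
  then have st: "is_string \<sigma>" by auto
  show "ev \<sigma> (\<lambda>t. t \<notin> E s) \<or> ev \<sigma> (\<lambda>t. t \<in> E s)"
  proof (cases "\<exists>t\<in>\<sigma>. t \<in> E s")
    case True
    then obtain t0 where t0: "t0\<in>\<sigma>" "t0 \<in> E s" by blast
    have "ev \<sigma> (\<lambda>t. t \<in> E s)"
      unfolding ev_def
    proof (intro bexI[OF _ t0(1)] ballI impI)
      fix t assume "t\<in>\<sigma>" "sdvd t0 t"
      then show "t \<in> E s" using E_right t0(2) string_nz[OF st] by blast
    qed
    then show ?thesis by blast
  next
    case False
    obtain t0 where "t0\<in>\<sigma>" using string_ne[OF st] by blast
    then have "ev \<sigma> (\<lambda>t. t \<notin> E s)" unfolding ev_def using False by blast
    then show ?thesis by blast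
  qed
qed

lemma HS_Sinv: "f \<in> HS \<Longrightarrow> Sinv (f::('a\<times>'a) set) \<and> Sinv (f\<inverse>)"
proof (induction rule: HS.induct)
  case (gen s) then show ?case using Sinv_theta Sinv_theta_inv by blast
next
  case (comp f g)
  then show ?case using Sinv_comp[of f g] Sinv_comp[of "g\<inverse>" "f\<inverse>"] HS_basic
    by (simp add: converse_relcomp)
next
  case (inv f) then show ?case by simp
qed


lemma char_01: "character \<psi> \<Longrightarrow> X \<in> ES \<Longrightarrow> \<psi> (X::'a set) = 0 \<or> \<psi> X = 1"
  unfolding character_def by blast
lemma char_mult: "character \<psi> \<Longrightarrow> X \<in> ES \<Longrightarrow> Y \<in> ES \<Longrightarrow> \<psi> ((X::'a set) \<inter> Y) = \<psi> X * \<psi> Y"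
  unfolding character_def by blast
lemma char_empty: "character \<psi> \<Longrightarrow> \<psi> ({}::'a set) = 0"
  unfolding character_def by blast
lemma char_mono: "character \<psi> \<Longrightarrow> X \<in> ES \<Longrightarrow> Y \<in> ES \<Longrightarrow> X \<subseteq> Y \<Longrightarrow> \<psi> (X::'a set) = 1 \<Longrightarrow> \<psi> Y = 1"
proof -
  assume c: "character \<psi>" "X \<in> ES" "Y \<in> ES" "X \<subseteq> Y" "\<psi> X = 1"
  then have "\<psi> X = \<psi> X * \<psi> Y" using char_mult[OF c(1-3)] by (simp add: Int_absorb2)
  then show ?thesis using c(5) by simp
qed
lemma char_int1: "character \<psi> \<Longrightarrow> X \<in> ES \<Longrightarrow> Y \<in> ES \<Longrightarrow> \<psi> (X::'a set) = 1 \<Longrightarrow> \<psi> Y = 1 \<Longrightarrow> \<psi> (X \<inter> Y) = 1"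
proof -
  assume a: "character \<psi>" "X \<in> ES" "Y \<in> ES" "\<psi> X = 1" "\<psi> Y = 1"
  show ?thesis using char_mult[OF a(1-3)] a(4,5) by simp
qed
lemma char_ne: "character \<psi> \<Longrightarrow> \<psi> (X::'a set) = 1 \<Longrightarrow> X \<noteq> {}"
  using char_empty by force

definition sig :: "('a set \<Rightarrow> nat) \<Rightarrow> 'a set" where
  "sig \<psi> = {s. \<psi> (E s) = 1}"

definition cj :: "('a set \<Rightarrow> nat) \<Rightarrow> ('a \<times> 'a) set \<Rightarrow> 'a set \<Rightarrow> nat" where
  "cj \<psi> f = (\<lambda>Y. \<psi> (pre f Y))"

lemma lcm_E: "is_lcm r s t \<Longrightarrow> E s \<inter> E t = E (r::'a)"
  unfolding is_lcm_def E_def by auto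

lemma sig_string: "character \<psi> \<Longrightarrow> sig \<psi> \<noteq> {} \<Longrightarrow> is_string (sig (\<psi>::'a set \<Rightarrow> nat))"
proof -
  assume c: "character \<psi>" and ne: "sig \<psi> \<noteq> {}"
  have z: "0 \<notin> sig \<psi>"
  proof
    assume "0 \<in> sig \<psi>"
    moreover have "E (0::'a) = {}" unfolding E_def right_ideal_def by auto
    ultimately show False using char_empty[OF c] unfolding sig_def by simp
  qed
  have down: "\<forall>t\<in>sig \<psi>. \<forall>s. sdvd s t \<longrightarrow> s \<in> sig \<psi>"
  proof (intro ballI allI impI)
    fix t s assume "t \<in> sig \<psi>" "sdvd s t"
    then have "\<psi> (E t) = 1" "E t \<subseteq> E s" using E_mono unfolding sig_def by auto
    then have "\<psi> (E s) = 1" using char_mono[OF c E_ES E_ES] by blast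
    then show "s \<in> sig \<psi>" unfolding sig_def by simp
  qed
  have dir: "\<forall>s\<in>sig \<psi>. \<forall>t\<in>sig \<psi>. \<exists>r\<in>sig \<psi>. sdvd s r \<and> sdvd t r"
  proof (intro ballI)
    fix s t assume st: "s \<in> sig \<psi>" "t \<in> sig \<psi>"
    obtain r where r: "is_lcm r s t" using lcmA unfolding admits_lcm_def by blast
    have "\<psi> (E s \<inter> E t) = 1" using char_int1[OF c E_ES E_ES] st unfolding sig_def by simp
    then have "\<psi> (E r) = 1" using lcm_E[OF r] by simp
    then show "\<exists>r\<in>sig \<psi>. sdvd s r \<and> sdvd t r" using r unfolding sig_def is_lcm_def by blast
  qed
  show ?thesis unfolding is_string_def using ne z down dir by blast
qed

lemma pre_comp: "pre (f O g) Y = pre f (pre g Y)"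
  unfolding pre_def by auto
lemma Dom_comp: "Domain (f O g) = pre f (Domain g)"
  unfolding pre_def by auto

lemma cj_char:
  assumes f: "f \<in> HS" and c: "character \<psi>" and d: "\<psi> (Domain f) = 1"
  shows "character (cj \<psi> (f::('a\<times>'a) set))"
proof -
  have sv: "single_valued f" using HS_sv[OF f] .
  have r: "Range f \<in> ES" using Dom_ES[OF HS.inv[OF f]] by simp
  have pr: "pre f (Range f) = Domain f" unfolding pre_def by auto
  have pint: "pre f (X \<inter> Y) = pre f X \<inter> pre f Y" for X Y
  proof
    show "pre f (X \<inter> Y) \<subseteq> pre f X \<inter> pre f Y" unfolding pre_def by blast
    show "pre f X \<inter> pre f Y \<subseteq> pre f (X \<inter> Y)"
    proof
      fix x assume "x \<in> pre f X \<inter> pre f Y"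
      then obtain y y' where "y\<in>X" "(x,y)\<in>f" "y'\<in>Y" "(x,y')\<in>f" unfolding pre_def by blast
      moreover then have "y = y'" using HS_fun[OF f] by blast
      ultimately show "x \<in> pre f (X \<inter> Y)" unfolding pre_def by blast
    qed
  qed
  show ?thesis unfolding character_def cj_def
  proof (intro conjI ballI)
    fix X :: "'a set" assume "X \<in> ES" then show "\<psi> (pre f X) \<in> {0,1}" using char_01[OF c pre_ES[OF f]] by blast
  next
    show "\<exists>X\<in>ES. \<psi> (pre f X) \<noteq> 0" using r pr d by (intro bexI[of _ "Range f"]) auto
  next
    show "\<psi> (pre f {}) = 0" using char_empty[OF c] unfolding pre_def by simp
  next
    fix X Y :: "'a set" assume "X \<in> ES" "Y \<in> ES"
    then show "\<psi> (pre f (X \<inter> Y)) = \<psi> (pre f X) * \<psi> (pre f Y)"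
      using pint char_mult[OF c pre_ES[OF f] pre_ES[OF f]] by simp
  qed
qed

lemma cj_cj: "cj (cj \<psi> f) g = cj \<psi> (f O g)"
  unfolding cj_def by (simp add: pre_comp)

definition Pinv :: "('a \<times> 'a) set \<Rightarrow> bool" where
  "Pinv f \<longleftrightarrow> (\<forall>\<psi>. character \<psi> \<and> sig \<psi> \<noteq> {} \<and> open_string (sig \<psi>) \<and> \<psi> (Domain f) = 1 \<longrightarrow>
     ev (sig \<psi>) (\<lambda>t. \<exists>y. (t,y)\<in>f \<and> y \<in> sig (cj \<psi> f)) \<and>
     (\<forall>y\<in>sig (cj \<psi> f). \<exists>t\<in>sig \<psi>. \<exists>x. (t,x)\<in>f \<and> sdvd y x))"


lemma sig_open:
  assumes f: "f \<in> HS" and c: "character \<psi>" and st: "is_string (sig \<psi>)" and op: "open_string (sig \<psi>)"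
    and d: "\<psi> (Domain f) = 1"
    and evf: "ev (sig \<psi>) (\<lambda>t. \<exists>y. (t,y)\<in>f \<and> y \<in> sig (cj \<psi> f))"
    and cof: "\<forall>y\<in>sig (cj \<psi> f). \<exists>t\<in>sig \<psi>. \<exists>x. (t,x)\<in>f \<and> sdvd y x"
  shows "sig (cj \<psi> (f::('a\<times>'a) set)) \<noteq> {} \<and> open_string (sig (cj \<psi> f))"
proof -
  let ?\<sigma> = "sig \<psi>" and ?\<tau> = "sig (cj \<psi> f)"
  have bf: "basic f" using HS_basic[OF f] by blast
  from evf obtain t0 where t0: "t0 \<in> ?\<sigma>" and T: "\<And>t. t\<in>?\<sigma> \<Longrightarrow> sdvd t0 t \<Longrightarrow> \<exists>y. (t,y)\<in>f \<and> y \<in> ?\<tau>"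
    unfolding ev_def by blast
  have ne: "?\<tau> \<noteq> {}" using T[OF t0 sdvd_refl] by blast
  have cc: "character (cj \<psi> f)" using cj_char[OF f c d] .
  have tst: "is_string ?\<tau>" using sig_string[OF cc ne] .
  have "?\<tau> = {s. \<exists>p. s*p \<in> ?\<tau>}"
  proof (rule set_eqI, rule iffI)
    fix y assume "y \<in> ?\<tau>"
    then obtain t x where 1: "t\<in>?\<sigma>" "(t,x)\<in>f" "sdvd y x" using cof by blast
    obtain c where cm: "c\<in>?\<sigma>" "sdvd t0 c" "sdvd t c" using string_dir[OF st t0 1(1)] by blast
    obtain xc where xc: "(c,xc)\<in>f" "xc \<in> ?\<tau>" using T cm by blast
    obtain x' where x': "(c,x')\<in>f" "sdvd x x'" using basic_sdvd[OF bf 1(2) cm(3)] xc by blast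
    have "x' = xc" using HS_fun[OF f x'(1) xc(1)] .
    obtain p where p: "c*p \<in> ?\<sigma>" using open_ext[OF op cm(1)] by blast
    obtain z where z: "(c*p,z)\<in>f" "z \<in> ?\<tau>" using T[OF p sdvd_mult_right[OF cm(2)]] by blast
    have "(c*p, xc*p) \<in> f" using bf xc(1) z(1) unfolding basic_def Lp_def by blast
    then have "z = xc*p" using HS_fun[OF f z(1)] by simp
    then have zz: "xc*p \<in> ?\<tau>" using z(2) by simp
    have yx: "sdvd y xc" using 1(3) x'(2) \<open>x' = xc\<close> sdvd_trans by blast
    then consider "xc = y" | u where "xc = y*u" unfolding sdvd_def by blast
    then show "y \<in> {s. \<exists>p. s*p \<in> ?\<tau>}"
    proof cases
      case 1 then show ?thesis using zz by blast
    next
      case (2 u) then have "xc*p = y*(u*p)" by (simp add: mult.assoc)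
      then show ?thesis using zz by auto
    qed
  next
    fix y assume "y \<in> {s. \<exists>p. s*p \<in> ?\<tau>}"
    then obtain p where "y*p \<in> ?\<tau>" by blast
    then show "y \<in> ?\<tau>" using string_down[OF tst] sdvd_mult by blast
  qed
  then show ?thesis using ne unfolding open_string_def by blast
qed

lemma Pinv_comp:
  assumes f: "f \<in> HS" and g: "g \<in> HS" and Pf: "Pinv f" and Pg: "Pinv g"
  shows "Pinv (f O (g::('a\<times>'a) set))"
  unfolding Pinv_def
proof (intro allI impI)
  fix \<psi> :: "'a set \<Rightarrow> nat"
  assume "character \<psi> \<and> sig \<psi> \<noteq> {} \<and> open_string (sig \<psi>) \<and> \<psi> (Domain (f O g)) = 1"
  then have c: "character \<psi>" and ne: "sig \<psi> \<noteq> {}" and op: "open_string (sig \<psi>)"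
    and d: "\<psi> (Domain (f O g)) = 1" by auto
  let ?\<sigma> = "sig \<psi>" and ?\<tau> = "sig (cj \<psi> f)" and ?\<rho> = "sig (cj \<psi> (f O g))"
  have st: "is_string ?\<sigma>" using sig_string[OF c ne] .
  have bf: "basic f" and bg: "basic g" using HS_basic f g by blast+
  have df: "\<psi> (Domain f) = 1"
    using char_mono[OF c Dom_ES[OF HS.comp[OF f g]] Dom_ES[OF f]] d by blast
  from Pf c ne op df have evf: "ev ?\<sigma> (\<lambda>t. \<exists>y. (t,y)\<in>f \<and> y \<in> ?\<tau>)"
    and cof: "\<forall>y\<in>?\<tau>. \<exists>t\<in>?\<sigma>. \<exists>x. (t,x)\<in>f \<and> sdvd y x"
    unfolding Pinv_def by blast+
  have so: "?\<tau> \<noteq> {} \<and> open_string ?\<tau>" using sig_open[OF f c st op df evf cof] .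
  have cc: "character (cj \<psi> f)" using cj_char[OF f c df] .
  have dg: "cj \<psi> f (Domain g) = 1" using d unfolding cj_def Dom_comp .
  have "ev ?\<tau> (\<lambda>t. \<exists>y. (t,y)\<in>g \<and> y \<in> sig (cj (cj \<psi> f) g)) \<and>
     (\<forall>y\<in>sig (cj (cj \<psi> f) g). \<exists>t\<in>?\<tau>. \<exists>x. (t,x)\<in>g \<and> sdvd y x)"
    using Pg cc so dg unfolding Pinv_def by blast
  then have evg: "ev ?\<tau> (\<lambda>t. \<exists>y. (t,y)\<in>g \<and> y \<in> ?\<rho>)"
    and cog: "\<forall>y\<in>?\<rho>. \<exists>t\<in>?\<tau>. \<exists>x. (t,x)\<in>g \<and> sdvd y x"
    unfolding cj_cj by blast+
  from evf obtain t0 where t0: "t0 \<in> ?\<sigma>" and T: "\<And>t. t\<in>?\<sigma> \<Longrightarrow> sdvd t0 t \<Longrightarrow> \<exists>y. (t,y)\<in>f \<and> y \<in> ?\<tau>"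
    unfolding ev_def by blast
  from evg obtain y0 where y0: "y0 \<in> ?\<tau>" and Y: "\<And>y. y\<in>?\<tau> \<Longrightarrow> sdvd y0 y \<Longrightarrow> \<exists>z. (y,z)\<in>g \<and> z \<in> ?\<rho>"
    unfolding ev_def by blast
  obtain t1 x1 where 1: "t1\<in>?\<sigma>" "(t1,x1)\<in>f" "sdvd y0 x1" using cof y0 by blast
  obtain t2 where t2: "t2\<in>?\<sigma>" "sdvd t0 t2" "sdvd t1 t2" using string_dir[OF st t0 1(1)] by blast
  have K: "\<exists>x z. (t,x)\<in>f \<and> x\<in>?\<tau> \<and> (x,z)\<in>g \<and> z\<in>?\<rho>" if t: "t\<in>?\<sigma>" "sdvd t2 t" for t
  proof -
    obtain x where x: "(t,x)\<in>f" "x\<in>?\<tau>" using T[OF t(1) sdvd_trans[OF t2(2) t(2)]] by blast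
    obtain x' where x': "(t,x')\<in>f" "sdvd x1 x'" using basic_sdvd[OF bf 1(2) sdvd_trans[OF t2(3) t(2)]] x(1) by blast
    have "x' = x" using HS_fun[OF f x'(1) x(1)] .
    then have "sdvd y0 x" using 1(3) x'(2) sdvd_trans by blast
    then obtain z where "(x,z)\<in>g" "z\<in>?\<rho>" using Y[OF x(2)] by blast
    then show ?thesis using x by blast
  qed
  have ev1: "ev ?\<sigma> (\<lambda>t. \<exists>y. (t,y)\<in>f O g \<and> y \<in> ?\<rho>)"
    unfolding ev_def
  proof (intro bexI[OF _ t2(1)] ballI impI)
    fix t assume "t\<in>?\<sigma>" "sdvd t2 t"
    then obtain x z where "(t,x)\<in>f" "(x,z)\<in>g" "z\<in>?\<rho>" using K by blast
    then show "\<exists>y. (t,y)\<in>f O g \<and> y \<in> ?\<rho>" by blast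
  qed
  have co1: "\<forall>z\<in>?\<rho>. \<exists>t\<in>?\<sigma>. \<exists>w. (t,w)\<in>f O g \<and> sdvd z w"
  proof
    fix z assume "z \<in> ?\<rho>"
    then obtain y w where yw: "y\<in>?\<tau>" "(y,w)\<in>g" "sdvd z w" using cog by blast
    then obtain t x where tx: "t\<in>?\<sigma>" "(t,x)\<in>f" "sdvd y x" using cof by blast
    obtain t3 where t3: "t3\<in>?\<sigma>" "sdvd t t3" "sdvd t2 t3" using string_dir[OF st tx(1) t2(1)] by blast
    obtain x3 z3 where k: "(t3,x3)\<in>f" "x3\<in>?\<tau>" "(x3,z3)\<in>g" using K[OF t3(1) t3(3)] by blast
    obtain x' where x': "(t3,x')\<in>f" "sdvd x x'" using basic_sdvd[OF bf tx(2) t3(2)] k(1) by blast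
    have "x' = x3" using HS_fun[OF f x'(1) k(1)] .
    then have "sdvd y x3" using tx(3) x'(2) sdvd_trans by blast
    then obtain w' where w': "(x3,w')\<in>g" "sdvd w w'" using basic_sdvd[OF bg yw(2)] k(3) by blast
    then have "(t3,w')\<in>f O g" using k(1) by blast
    moreover have "sdvd z w'" using yw(3) w'(2) sdvd_trans by blast
    ultimately show "\<exists>t\<in>?\<sigma>. \<exists>w. (t,w)\<in>f O g \<and> sdvd z w" using t3(1) by blast
  qed
  show "ev ?\<sigma> (\<lambda>t. \<exists>y. (t,y)\<in>f O g \<and> y \<in> ?\<rho>) \<and> (\<forall>y\<in>?\<rho>. \<exists>t\<in>?\<sigma>. \<exists>x. (t,x)\<in>f O g \<and> sdvd y x)"
    using ev1 co1 by blast
qed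


lemma Pinv_theta: "Pinv (theta (s::'a))"
  unfolding Pinv_def
proof (intro allI impI)
  fix \<psi> :: "'a set \<Rightarrow> nat"
  assume "character \<psi> \<and> sig \<psi> \<noteq> {} \<and> open_string (sig \<psi>) \<and> \<psi> (Domain (theta s)) = 1"
  then have c: "character \<psi>" and ne: "sig \<psi> \<noteq> {}" and d: "\<psi> (Domain (theta s)) = 1" by auto
  let ?\<sigma> = "sig \<psi>" and ?F = "{x. x\<noteq>0 \<and> s*x \<noteq> 0}"
  have st: "is_string ?\<sigma>" using sig_string[OF c ne] .
  have dF: "\<psi> ?F = 1" using d Dom_theta by simp
  have A: "s*t \<noteq> 0" if t: "t \<in> ?\<sigma>" for t
  proof
    assume z: "s*t = 0"
    have "?F \<inter> E t = {}"
    proof (rule ccontr)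
      assume "?F \<inter> E t \<noteq> {}"
      then obtain x where "x \<in> ?F" "x \<in> E t" by blast
      then obtain u where "x = t*u" "s*x \<noteq> 0" unfolding E_def right_ideal_def by auto
      then have "s*x = (s*t)*u" by (simp add: mult.assoc)
      then show False using z \<open>s*x \<noteq> 0\<close> by simp
    qed
    moreover have "\<psi> (?F \<inter> E t) = 1" using char_int1[OF c F_ES E_ES dF] t unfolding sig_def by simp
    ultimately show False using char_empty[OF c] by simp
  qed
  have FE: "\<psi> (?F \<inter> E t) = 1" if "t \<in> ?\<sigma>" for t
    using char_int1[OF c F_ES E_ES dF] that unfolding sig_def by simp
  obtain t0 where t0: "t0 \<in> ?\<sigma>" using ne by blast
  have ev1: "ev ?\<sigma> (\<lambda>t. \<exists>y. (t,y)\<in>theta s \<and> y \<in> sig (cj \<psi> (theta s)))"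
    unfolding ev_def
  proof (intro bexI[OF _ t0] ballI impI)
    fix t assume t: "t \<in> ?\<sigma>"
    have tt: "(t, s*t) \<in> theta s" using A[OF t] string_nz[OF st t] unfolding theta_def by auto
    have sub: "?F \<inter> E t \<subseteq> pre (theta s) (E (s*t))"
    proof
      fix x assume "x \<in> ?F \<inter> E t"
      then obtain u where x: "x = t*u" "x \<noteq> 0" "s*x \<noteq> 0" unfolding E_def right_ideal_def by auto
      then have "s*x = (s*t)*u" by (simp add: mult.assoc)
      then have "s*x \<in> E (s*t)" using x unfolding E_def right_ideal_def by auto
      moreover have "(x, s*x) \<in> theta s" using x unfolding theta_def by auto
      ultimately show "x \<in> pre (theta s) (E (s*t))" unfolding pre_def by blast
    qed
    have "\<psi> (pre (theta s) (E (s*t))) = 1"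
      using char_mono[OF c Int_ES[OF F_ES E_ES] pre_ES[OF HS.gen E_ES] sub FE[OF t]] .
    then have "s*t \<in> sig (cj \<psi> (theta s))" unfolding sig_def cj_def by simp
    then show "\<exists>y. (t,y)\<in>theta s \<and> y \<in> sig (cj \<psi> (theta s))" using tt by blast
  qed
  have co1: "\<forall>y\<in>sig (cj \<psi> (theta s)). \<exists>t\<in>?\<sigma>. \<exists>x. (t,x)\<in>theta s \<and> sdvd y x"
  proof
    fix y assume "y \<in> sig (cj \<psi> (theta s))"
    then have py: "\<psi> (pre (theta s) (E y)) = 1" unfolding sig_def cj_def by simp
    obtain r where r: "is_lcm r s y" using lcmA unfolding admits_lcm_def by blast
    then have "sdvd s r" "sdvd y r" unfolding is_lcm_def by auto
    then consider "r = s" | \<alpha> where "r = s*\<alpha>" unfolding sdvd_def by blast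
    then show "\<exists>t\<in>?\<sigma>. \<exists>x. (t,x)\<in>theta s \<and> sdvd y x"
    proof cases
      case 1
      have "(t0, s*t0) \<in> theta s" using A[OF t0] string_nz[OF st t0] unfolding theta_def by auto
      moreover have "sdvd y (s*t0)" using \<open>sdvd y r\<close> 1 sdvd_mult_right by blast
      ultimately show ?thesis using t0 by blast
    next
      case (2 \<alpha>)
      have sub: "pre (theta s) (E y) \<subseteq> E \<alpha>"
      proof
        fix x assume "x \<in> pre (theta s) (E y)"
        then have x: "x \<noteq> 0" "s*x \<noteq> 0" "s*x \<in> E y" unfolding pre_def theta_def by auto
        then have "s*x \<in> right_ideal s \<inter> right_ideal y" unfolding E_def right_ideal_def by auto
        then have "s*x \<in> right_ideal r" using r unfolding is_lcm_def by blast
        then obtain q where "s*x = r*q" unfolding right_ideal_def by auto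
        then have "s*x = s*(\<alpha>*q)" using 2 by (simp add: mult.assoc)
        then have "x = \<alpha>*q" using cancel x(2) by blast
        then show "x \<in> E \<alpha>" using x(1) unfolding E_def right_ideal_def by auto
      qed
      have "\<psi> (E \<alpha>) = 1" using char_mono[OF c pre_ES[OF HS.gen E_ES] E_ES sub py] .
      then have a: "\<alpha> \<in> ?\<sigma>" unfolding sig_def by simp
      have "(\<alpha>, s*\<alpha>) \<in> theta s" using A[OF a] string_nz[OF st a] unfolding theta_def by auto
      moreover have "sdvd y (s*\<alpha>)" using \<open>sdvd y r\<close> 2 by simp
      ultimately show ?thesis using a by blast
    qed
  qed
  show "ev ?\<sigma> (\<lambda>t. \<exists>y. (t,y)\<in>theta s \<and> y \<in> sig (cj \<psi> (theta s))) \<and>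
    (\<forall>y\<in>sig (cj \<psi> (theta s)). \<exists>t\<in>?\<sigma>. \<exists>x. (t,x)\<in>theta s \<and> sdvd y x)" using ev1 co1 by blast
qed

lemma Pinv_theta_inv: "Pinv ((theta (s::'a))\<inverse>)"
  unfolding Pinv_def
proof (intro allI impI)
  fix \<psi> :: "'a set \<Rightarrow> nat"
  let ?f = "(theta s)\<inverse>"
  assume "character \<psi> \<and> sig \<psi> \<noteq> {} \<and> open_string (sig \<psi>) \<and> \<psi> (Domain ?f) = 1"
  then have c: "character \<psi>" and ne: "sig \<psi> \<noteq> {}" and op: "open_string (sig \<psi>)"
    and d: "\<psi> (Domain ?f) = 1" by auto
  let ?\<sigma> = "sig \<psi>"
  have st: "is_string ?\<sigma>" using sig_string[OF c ne] .
  have fH: "?f \<in> HS" by (rule HS.inv[OF HS.gen])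
  have "s \<in> ?\<sigma>" using d Dom_theta_inv unfolding sig_def by simp
  then obtain p where p: "s*p \<in> ?\<sigma>" using open_ext[OF op] by blast
  have ev1: "ev ?\<sigma> (\<lambda>t. \<exists>y. (t,y)\<in>?f \<and> y \<in> sig (cj \<psi> ?f))"
    unfolding ev_def
  proof (intro bexI[OF _ p] ballI impI)
    fix t assume t: "t \<in> ?\<sigma>" "sdvd (s*p) t"
    then obtain w where w: "t = s*w" unfolding sdvd_def by (auto simp: mult.assoc)
    have tnz: "t \<noteq> 0" using string_nz[OF st t(1)] .
    then have wnz: "w \<noteq> 0" using w by auto
    have tw: "(t,w) \<in> ?f" using w tnz wnz unfolding theta_def by auto
    have sub: "E t \<subseteq> pre ?f (E w)"
    proof
      fix x assume "x \<in> E t"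
      then obtain v where x: "x = t*v" "x \<noteq> 0" unfolding E_def right_ideal_def by auto
      then have xs: "x = s*(w*v)" using w by (simp add: mult.assoc)
      then have "w*v \<noteq> 0" using x(2) by auto
      then have "(x, w*v) \<in> ?f" "w*v \<in> E w" using xs x(2) unfolding theta_def E_def right_ideal_def by auto
      then show "x \<in> pre ?f (E w)" unfolding pre_def by blast
    qed
    have "\<psi> (E t) = 1" using t(1) unfolding sig_def by simp
    then have "\<psi> (pre ?f (E w)) = 1" using char_mono[OF c E_ES pre_ES[OF fH E_ES] sub] by blast
    then have "w \<in> sig (cj \<psi> ?f)" unfolding sig_def cj_def by simp
    then show "\<exists>y. (t,y)\<in>?f \<and> y \<in> sig (cj \<psi> ?f)" using tw by blast
  qed
  have co1: "\<forall>y\<in>sig (cj \<psi> ?f). \<exists>t\<in>?\<sigma>. \<exists>x. (t,x)\<in>?f \<and> sdvd y x"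
  proof
    fix y assume "y \<in> sig (cj \<psi> ?f)"
    then have py: "\<psi> (pre ?f (E y)) = 1" unfolding sig_def cj_def by simp
    have sub: "pre ?f (E y) \<subseteq> E (s*y)"
    proof
      fix x assume "x \<in> pre ?f (E y)"
      then obtain y' where "(x,y') \<in> ?f" "y' \<in> E y" unfolding pre_def by blast
      then obtain v where "x = s*y'" "x \<noteq> 0" "y' = y*v" unfolding theta_def E_def right_ideal_def by auto
      then show "x \<in> E (s*y)" unfolding E_def right_ideal_def by (auto simp: mult.assoc)
    qed
    have "\<psi> (E (s*y)) = 1" using char_mono[OF c pre_ES[OF fH E_ES] E_ES sub py] .
    then have "s*y \<in> ?\<sigma>" unfolding sig_def by simp
    then obtain q where q: "(s*y)*q \<in> ?\<sigma>" using open_ext[OF op] by blast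
    then have nz: "s*(y*q) \<noteq> 0" using string_nz[OF st q] by (simp add: mult.assoc)
    then have "y*q \<noteq> 0" by auto
    then have "(s*(y*q), y*q) \<in> ?f" using nz unfolding theta_def by auto
    moreover have "s*(y*q) \<in> ?\<sigma>" using q by (simp add: mult.assoc)
    ultimately show "\<exists>t\<in>?\<sigma>. \<exists>x. (t,x)\<in>?f \<and> sdvd y x" using sdvd_mult by blast
  qed
  show "ev ?\<sigma> (\<lambda>t. \<exists>y. (t,y)\<in>?f \<and> y \<in> sig (cj \<psi> ?f)) \<and>
    (\<forall>y\<in>sig (cj \<psi> ?f). \<exists>t\<in>?\<sigma>. \<exists>x. (t,x)\<in>?f \<and> sdvd y x)" using ev1 co1 by blast
qed

lemma HS_Pinv: "f \<in> HS \<Longrightarrow> Pinv (f::('a\<times>'a) set) \<and> Pinv (f\<inverse>)"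
proof (induction rule: HS.induct)
  case (gen s) then show ?case using Pinv_theta Pinv_theta_inv by blast
next
  case (comp f g)
  have "Pinv (f O g)" using Pinv_comp[of f g] comp by blast
  moreover have "Pinv (g\<inverse> O f\<inverse>)" using Pinv_comp[of "g\<inverse>" "f\<inverse>"] comp HS.inv by blast
  ultimately show ?case by (simp add: converse_relcomp)
next
  case (inv f) then show ?case by simp
qed


lemma phi_ev: "is_string \<sigma> \<Longrightarrow> ev \<sigma> (\<lambda>t. t \<in> X) \<Longrightarrow> phi \<sigma> (X::'a set) = 1"
  unfolding phi_def using ev_cofinal[of \<sigma> "\<lambda>t. t\<in>X"] by auto

lemma phi_N: "is_string \<sigma> \<Longrightarrow> ev \<sigma> (\<lambda>t. t \<notin> X) \<Longrightarrow> phi \<sigma> (X::'a set) = 0"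
proof -
  assume st: "is_string \<sigma>" and e: "ev \<sigma> (\<lambda>t. t \<notin> X)"
  then obtain t0 where t0: "t0\<in>\<sigma>" "\<And>t. t\<in>\<sigma> \<Longrightarrow> sdvd t0 t \<Longrightarrow> t \<notin> X" unfolding ev_def by blast
  then have "\<not> (\<forall>s\<in>\<sigma>. \<exists>t\<in>\<sigma> \<inter> X. sdvd s t)" by blast
  then show ?thesis unfolding phi_def by simp
qed

lemma phi_dich:
  assumes X: "X \<in> ES" and st: "is_string \<sigma>" and op: "open_string \<sigma>"
  shows "(phi \<sigma> (X::'a set) = 1 \<and> ev \<sigma> (\<lambda>t. t \<in> X)) \<or> (phi \<sigma> X = 0 \<and> ev \<sigma> (\<lambda>t. t \<notin> X))"
proof -
  have "Sinv (Id_on X)" using HS_Sinv[OF IdX_ES[OF X]] by blast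
  then have "ev \<sigma> (\<lambda>t. t \<notin> X) \<or> ev \<sigma> (\<lambda>t. t \<in> X)" using st op unfolding Sinv_def by simp
  then show ?thesis using phi_ev[OF st] phi_N[OF st] by blast
qed

lemma phi_E: "is_string \<sigma> \<Longrightarrow> open_string \<sigma> \<Longrightarrow> s\<in>\<sigma> \<Longrightarrow> phi \<sigma> (E (s::'a)) = 1"
proof -
  assume st: "is_string \<sigma>" and op: "open_string \<sigma>" and s: "s\<in>\<sigma>"
  have "\<exists>t\<in>\<sigma> \<inter> E s. sdvd r t" if r: "r \<in> \<sigma>" for r
  proof -
    obtain c where c: "c\<in>\<sigma>" "sdvd r c" "sdvd s c" using string_dir[OF st r s] by blast
    obtain p where p: "c*p \<in> \<sigma>" using open_ext[OF op c(1)] by blast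
    have "sdvd s (c*p)" using sdvd_mult_right[OF c(3)] .
    then obtain w where "c*p = s*w" unfolding sdvd_def by (metis mult.assoc sdvd_def c(3))
    then have "c*p \<in> E s" using string_nz[OF st p] unfolding E_def right_ideal_def by auto
    then show ?thesis using p sdvd_mult_right[OF c(2)] by blast
  qed
  then show ?thesis unfolding phi_def by simp
qed

lemma phi_char:
  assumes st: "is_string \<sigma>" and op: "open_string \<sigma>"
  shows "character (phi (\<sigma>::'a set))"
  unfolding character_def
proof (intro conjI ballI)
  fix X :: "'a set" show "phi \<sigma> X \<in> {0,1}" unfolding phi_def by simp
next
  obtain s where "s \<in> \<sigma>" using string_ne[OF st] by blast
  then have "phi \<sigma> (E s) = 1" using phi_E[OF st op] by blast
  then show "\<exists>X\<in>ES. phi \<sigma> X \<noteq> (0::nat)" using E_ES[of s] by (intro bexI[of _ "E s"]) auto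
next
  obtain s where "s \<in> \<sigma>" using string_ne[OF st] by blast
  then show "phi \<sigma> {} = 0" unfolding phi_def by auto
next
  fix X Y :: "'a set" assume X: "X\<in>ES" and Y: "Y\<in>ES"
  show "phi \<sigma> (X \<inter> Y) = phi \<sigma> X * phi \<sigma> Y"
  proof (cases "phi \<sigma> X = 1 \<and> phi \<sigma> Y = 1")
    case True
    then have "ev \<sigma> (\<lambda>t. t \<in> X)" "ev \<sigma> (\<lambda>t. t \<in> Y)" using phi_dich[OF X st op] phi_dich[OF Y st op] by auto
    then have "ev \<sigma> (\<lambda>t. t \<in> X \<inter> Y)" using ev_conj[OF st] by fastforce
    then show ?thesis using phi_ev[OF st] True by simp
  next
    case False
    then have "phi \<sigma> X = 0 \<or> phi \<sigma> Y = 0" using phi_dich[OF X st op] phi_dich[OF Y st op] by auto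
    moreover have "phi \<sigma> (X \<inter> Y) = 0" if "phi \<sigma> X = 0 \<or> phi \<sigma> Y = 0"
      using that unfolding phi_def by (auto split: if_splits)
    ultimately show ?thesis by auto
  qed
qed

lemma ultra:
  assumes op: "open_string \<sigma>" and mx: "maximal_string (\<sigma>::'a set)"
  shows "ultracharacter (phi \<sigma>)"
  unfolding ultracharacter_def
proof (intro conjI allI impI ballI)
  have st: "is_string \<sigma>" using mx unfolding maximal_string_def by blast
  show "character (phi \<sigma>)" using phi_char[OF st op] .
  fix \<psi> and X :: "'a set" assume h: "character \<psi> \<and> (\<forall>X\<in>ES. phi \<sigma> X \<le> \<psi> X)" and X: "X \<in> ES"
  then have c: "character \<psi>" and le: "\<And>X. X\<in>ES \<Longrightarrow> phi \<sigma> X \<le> \<psi> X" by auto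
  have sub: "\<sigma> \<subseteq> sig \<psi>"
  proof
    fix s assume s: "s \<in> \<sigma>"
    have "1 \<le> \<psi> (E s)" using le[OF E_ES] phi_E[OF st op s] by metis
    moreover have "\<psi> (E s) = 0 \<or> \<psi> (E s) = 1" using char_01[OF c E_ES] .
    ultimately show "s \<in> sig \<psi>" unfolding sig_def by auto
  qed
  have ne: "sig \<psi> \<noteq> {}" using sub string_ne[OF st] by blast
  have eq: "sig \<psi> = \<sigma>" using mx sig_string[OF c ne] sub unfolding maximal_string_def by blast
  show "phi \<sigma> X = \<psi> X"
  proof (cases "\<psi> X = 1")
    case True
    have "Pinv (Id_on X)" using HS_Pinv[OF IdX_ES[OF X]] by blast
    moreover have "Domain (Id_on X) = X" by auto
    ultimately have "ev (sig \<psi>) (\<lambda>t. \<exists>y. (t,y)\<in>Id_on X \<and> y \<in> sig (cj \<psi> (Id_on X)))"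
      using c ne op eq True unfolding Pinv_def by auto
    then have "ev \<sigma> (\<lambda>t. \<exists>y. (t,y)\<in>Id_on X \<and> y \<in> sig (cj \<psi> (Id_on X)))" using eq by simp
    then have "ev \<sigma> (\<lambda>t. t \<in> X)" by (rule ev_mono) auto
    then show ?thesis using phi_ev[OF st] True by simp
  next
    case False
    then have "\<psi> X = 0" using char_01[OF c X] by blast
    then show ?thesis using le[OF X] by simp
  qed
qed

end

theorem theorem16p18:
  fixes \<sigma> :: "'a::{semigroup_mult,mult_zero} set"
  assumes "zero_left_cancellative TYPE('a)"
    and "admits_lcm TYPE('a)"
    and "open_string \<sigma>"
    and "maximal_string \<sigma>"
  shows "ultracharacter (phi \<sigma>)"
  using zl.ultra[OF zl.intro[OF assms(1,2)] assms(3,4)] .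

end
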